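(* Let $\mathbb{D}=\{z\in\mathbb{C}:|z|<1\}$ and let $z_1,z_2\in\mathbb{D}\setminus\{0\}$ be distinct. Let $z',z''$ be the two intersection points of the perpendicular bisector of the segment $[z_1,z_2]$ with the unit circle, namely \[ \{z',z''\}=\left\{\frac{z_1-z_2}{|z_1-z_2|}\left(\frac{|z_1|^2-|z_2|^2}{2|z_1-z_2|}\pm i\sqrt{1-\Big(\frac{|z_1|^2-|z_2|^2}{2|z_1-z_2|}\Big)^2}\right)\right\}. \] Then \[ b_{\mathbb{D},\infty}(z_1,z_2)=\begin{cases}\dfrac{|z_1-z_2|}{1-\min\{|z_1|,|z_2|\}}, & \text{if } |z_1|\le 1-\Big|z_2-\frac{z_1}{|z_1|}\Big| \text{ or } |z_2|\le 1-\Big|z_1-\frac{z_2}{|z_2|}\Big|,\\[2mm] \dfrac{|z_1-z_2|}{\min\{|z'-z_1|,|z''-z_1|\}}, & \text{otherwise}.\end{cases} \]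
   Context: For $z_1,z_2\in\mathbb{D}$, $b_{\mathbb{D},\infty}(z_1,z_2)=\sup_{w\in\partial\mathbb{D}}\frac{|z_1-z_2|}{\max\{|z_1-w|,|z_2-w|\}}$. *)

theory Defs
  imports "HOL-Analysis.Analysis"
begin

definition b_D_inf :: "complex \<Rightarrow> complex \<Rightarrow> real" where
  "b_D_inf z1 z2 =
     (SUP w\<in>sphere 0 1. cmod (z1 - z2) / max (cmod (z1 - w)) (cmod (z2 - w)))"

end

theory Submission
  imports Defs
begin

lemma K:
  fixes x Y c d :: real
  assumes "x^2 + Y^2 = 1" "c^2 + d^2 = 1" "Y \<ge> 0" "d \<ge> 0" "x \<le> c"
  shows "c*Y - d*x \<ge> 0"
proof (cases "x \<ge> 0")
  case True
  then have "c^2 \<ge> x^2" using assms by (simp add: power_mono)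
  then have "d^2 \<le> Y^2" using assms by linarith
  then have "d \<le> Y" using assms by (meson power2_le_imp_le)
  have "c*Y \<ge> x*Y" using assms by (simp add: mult_right_mono)
  moreover have "x*Y \<ge> x * d" using True \<open>d \<le> Y\<close> by (simp add: mult_left_mono)
  ultimately show ?thesis by (simp add: algebra_simps)
next
  case False
  show ?thesis
  proof (cases "c \<ge> 0")
    case True
    then show ?thesis using False assms by (smt (verit) mult_nonneg_nonneg mult_nonneg_nonpos)
  next
    case F2: False
    have "(-x)^2 \<ge> (-c)^2" using assms F2 by (intro power_mono) auto
    then have "x^2 \<ge> c^2" by simp
    then have "Y^2 \<le> d^2" using assms by linarith
    then have "Y \<le> d" using assms by (meson power2_le_imp_le)
    have "d*(-x) \<ge> d*(-c)" using assms by (simp add: mult_left_mono)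
    moreover have "d*(-c) \<ge> Y*(-c)" using F2 \<open>Y \<le> d\<close> by (simp add: mult_right_mono)
    ultimately show ?thesis by (simp add: algebra_simps)
  qed
qed

lemma L:
  fixes x Y a s c d :: real
  assumes "x^2 + Y^2 = 1" "a^2 + s^2 = 1" "c^2 + d^2 = 1" "Y \<ge> 0" "s \<ge> 0" "d \<ge> 0"
    "x \<le> a" "a < c"
  shows "x*c + Y*d \<le> a*c + s*d"
proof (cases "Y + s = 0")
  case True
  then have "Y = 0" "s = 0" using assms by auto
  then have "x^2 = 1" "a^2 = 1" using assms by auto
  then have "x = 1 \<or> x = -1" "a = 1 \<or> a = -1" by (auto simp: power2_eq_1_iff)
  then have xa: "x = a \<or> (x = -1 \<and> a = 1)" using assms(7) by auto
  have "c^2 \<le> 1" using assms(3) zero_le_power2[of d] by linarith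
  then have "c^2 \<le> 1^2" by simp
  then have "c \<le> 1" by (rule power2_le_imp_le) simp
  then have "x = a" using xa assms(8) by auto
  then show ?thesis using \<open>Y = 0\<close> \<open>s = 0\<close> by simp
next
  case False
  then have pos: "Y + s > 0" using assms by auto
  have id: "(Y+s)*((x-a)*c + (Y-s)*d) = (x-a)*((c*Y - d*x) + (c* s - d*a))"
  proof -
    have "Y^2 - s^2 = a^2 - x^2" using assms by linarith
    then have "(Y+s)*(Y-s) = (a-x)*(a+x)" by (simp add: power2_eq_square algebra_simps)
    have "(Y+s)*((x-a)*c + (Y-s)*d) = (x-a)*(Y+s)*c + ((Y+s)*(Y-s))*d" by (simp add: algebra_simps)
    also have "\<dots> = (x-a)*(Y+s)*c + ((a-x)*(a+x))*d" using \<open>(Y+s)*(Y-s) = (a-x)*(a+x)\<close> by simp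
    also have "\<dots> = (x-a)*((c*Y - d*x) + (c* s - d*a))" by (simp add: algebra_simps)
    finally show ?thesis .
  qed
  have k1: "c*Y - d*x \<ge> 0" using K[of x Y c d] assms by auto
  have k2: "c* s - d*a \<ge> 0" using K[of a s c d] assms by auto
  have "(x-a)*((c*Y - d*x) + (c* s - d*a)) \<le> 0" using assms k1 k2 by (simp add: mult_nonpos_nonneg)
  then have "(Y+s)*((x-a)*c + (Y-s)*d) \<le> 0" using id by simp
  then have "(x-a)*c + (Y-s)*d \<le> 0" using pos by (simp add: mult_le_0_iff)
  then show ?thesis by (simp add: algebra_simps)
qed

lemma lin1:
  fixes u1 u2 u3 u4 u5 u6 u7 :: real
  assumes "u1 + u2 \<le> u3 + u4" "u5 \<le> u2" "u6 = 1 + u7 - 2*(u1 + u5)"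
  shows "u7 + 1 - 2*(u3+u4) \<le> u6"
  using assms by argo

lemma sq_exp:
  fixes x y p q :: real
  shows "x^2+y^2 = 1 \<Longrightarrow> (x-p)^2+(y-q)^2 = 1 + (p^2+q^2) - 2*(x*p+y*q)"
  by (simp add: power2_eq_square algebra_simps)

lemma scale_back:
  fixes x Y a S c d r :: real
  assumes "x*(c/r) + Y*(d/r) \<le> a*(c/r) + S*(d/r)" "r > 0"
  shows "x*c + Y*d \<le> a*c + S*d"
proof -
  have "(x*(c/r) + Y*(d/r))*r \<le> (a*(c/r) + S*(d/r))*r" using assms by (simp add: mult_right_mono)
  moreover have "(x*(c/r) + Y*(d/r))*r = x*c + Y*d" using assms(2) by (simp add: field_simps)
  moreover have "(a*(c/r) + S*(d/r))*r = a*c + S*d" using assms(2) by (simp add: field_simps)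
  ultimately show ?thesis by simp
qed

lemma unit_div:
  fixes c d r :: real
  assumes "r^2 = c^2 + d^2" "r > 0"
  shows "(c/r)^2 + (d/r)^2 = 1"
proof -
  have "(c/r)^2 + (d/r)^2 = (c^2+d^2)/r^2" by (simp add: power_divide add_divide_distrib)
  also have "\<dots> = 1" using assms(1)[symmetric] assms(2) by simp
  finally show ?thesis .
qed

lemma mpart:
  fixes a p1 q S :: real
  assumes "a^2 + S^2 = 1"
  shows "min ((a-p1)^2+(S-q)^2) ((a-p1)^2+(-S-q)^2) \<le> p1^2+q^2+1-2*(a*p1+S*\<bar>q\<bar>)"
proof (cases "q \<ge> 0")
  case True
  then have qq: "\<bar>q\<bar> = q" by simp
  have "(a-p1)^2+(S-q)^2 = p1^2+q^2+(a^2+S^2)-2*(a*p1+S*q)"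
    by (simp add: power2_eq_square algebra_simps)
  then show ?thesis using assms qq by simp
next
  case False
  then have qq: "\<bar>q\<bar> = -q" by simp
  have "(a-p1)^2+(-S-q)^2 = p1^2+q^2+(a^2+S^2)-2*(a*p1+S*(-q))"
    by (simp add: power2_eq_square algebra_simps)
  then show ?thesis using assms qq by simp
qed

lemma core:
  fixes x y p1 p2 q a S r1 r2 :: real
  assumes xy: "x^2+y^2=1" and p: "p2 < p1" and a: "a = (p1+p2)/2"
    and aS: "a^2 + S^2 = 1" and S0: "S \<ge> 0"
    and r1: "r1^2 = p1^2+q^2" "r1 > 0" "a*r1 < p1"
    and r2: "r2^2 = p2^2+q^2" "r2 > 0" "p2 < a*r2"
  shows "min ((a-p1)^2+(S-q)^2) ((a-p1)^2+(-S-q)^2) \<le> max ((x-p1)^2+(y-q)^2) ((x-p2)^2+(y-q)^2)"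
proof -
  have m: "min ((a-p1)^2+(S-q)^2) ((a-p1)^2+(-S-q)^2) \<le> p1^2+q^2+1-2*(a*p1+S*\<bar>q\<bar>)"
    using mpart[OF aS] .
  have yq: "y*q \<le> \<bar>y\<bar>*\<bar>q\<bar>" by (metis abs_ge_self abs_mult)
  have xy1: "(-x)^2 + \<bar>y\<bar>^2 = 1" "x^2 + \<bar>y\<bar>^2 = 1" using xy by simp_all
  have aS': "(-a)^2 + S^2 = 1" using aS by simp
  have qq: "\<bar>q\<bar>^2 = q^2" "(-p2)^2 = p2^2" by simp_all
  show ?thesis
  proof (cases "x \<le> a")
    case True
    have c1: "(p1/r1)^2 + (\<bar>q\<bar>/r1)^2 = 1"
      using unit_div[of r1 p1 "\<bar>q\<bar>"] r1 qq by simp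
    have lt: "a < p1/r1" using r1 by (simp add: pos_less_divide_eq)
    have d0: "\<bar>q\<bar>/r1 \<ge> 0" using r1 by simp
    have "x*(p1/r1) + \<bar>y\<bar>*(\<bar>q\<bar>/r1) \<le> a*(p1/r1) + S*(\<bar>q\<bar>/r1)"
      using L[OF xy1(2) aS c1 abs_ge_zero S0 d0 True lt] .
    from scale_back[OF this r1(2)]
    have h: "x*p1 + \<bar>y\<bar>*\<bar>q\<bar> \<le> a*p1 + S*\<bar>q\<bar>" .
    have "p1^2+q^2+1-2*(a*p1+S*\<bar>q\<bar>) \<le> (x-p1)^2+(y-q)^2"
      by (rule lin1[OF h yq sq_exp[OF xy]])
    then show ?thesis using m by linarith
  next
    case False
    have c1: "(-p2/r2)^2 + (\<bar>q\<bar>/r2)^2 = 1"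
      using unit_div[of r2 "-p2" "\<bar>q\<bar>"] r2 qq by simp
    have "p2/r2 < a" using r2 by (simp add: pos_divide_less_eq)
    then have lt: "-a < -p2/r2" by simp
    have d0: "\<bar>q\<bar>/r2 \<ge> 0" using r2 by simp
    have le: "-x \<le> -a" using False by simp
    have "(-x)*(-p2/r2) + \<bar>y\<bar>*(\<bar>q\<bar>/r2) \<le> (-a)*(-p2/r2) + S*(\<bar>q\<bar>/r2)"
      using L[OF xy1(1) aS' c1 abs_ge_zero S0 d0 le lt] .
    from scale_back[OF this r2(2)]
    have h: "x*p2 + \<bar>y\<bar>*\<bar>q\<bar> \<le> a*p2 + S*\<bar>q\<bar>" by simp
    have "p2^2+q^2+1-2*(a*p2+S*\<bar>q\<bar>) \<le> (x-p2)^2+(y-q)^2"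
      by (rule lin1[OF h yq sq_exp[OF xy]])
    moreover have "p2^2 - 2*a*p2 = p1^2 - 2*a*p1" using a by (simp add: power2_eq_square algebra_simps)
    ultimately show ?thesis using m by (simp add: algebra_simps)
  qed
qed



lemma sup_lemma:
  assumes "w0 \<in> sphere 0 1" "max (cmod (z1-w0)) (cmod (z2-w0)) = m" "m > 0"
    "\<And>w. w \<in> sphere 0 1 \<Longrightarrow> m \<le> max (cmod (z1-w)) (cmod (z2-w))"
  shows "b_D_inf z1 z2 = cmod (z1-z2) / m"
  unfolding b_D_inf_def
proof (rule cSup_eq_maximum)
  show "cmod (z1 - z2) / m \<in> (\<lambda>w. cmod (z1 - z2) / max (cmod (z1 - w)) (cmod (z2 - w))) ` sphere 0 1"
    using assms(1,2) by force
next
  fix y assume "y \<in> (\<lambda>w. cmod (z1 - z2) / max (cmod (z1 - w)) (cmod (z2 - w))) ` sphere 0 1"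
  then obtain w where w: "w \<in> sphere 0 1" "y = cmod (z1 - z2) / max (cmod (z1 - w)) (cmod (z2 - w))"
    by blast
  show "y \<le> cmod (z1 - z2) / m"
    unfolding w(2) by (rule divide_left_mono) (use assms(3) assms(4)[OF w(1)] in auto)
qed

lemma b_sym: "b_D_inf z1 z2 = b_D_inf z2 z1"
  unfolding b_D_inf_def by (simp add: norm_minus_commute max.commute)

lemma caseA:
  assumes "cmod z1 < 1" "z1 \<noteq> 0" "cmod z1 \<le> 1 - cmod (z2 - z1 / complex_of_real (cmod z1))"
  shows "b_D_inf z1 z2 = cmod (z1 - z2) / (1 - cmod z1)" "cmod z1 \<le> cmod z2"
proof -
  define r where "r = cmod z1"
  define w1 where "w1 = z1 / complex_of_real r"
  have r0: "r > 0" using assms(2) r_def by simp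
  have w1n: "cmod w1 = 1" using r0 unfolding w1_def r_def by (simp add: norm_divide)
  have z1eq: "z1 = complex_of_real r * w1" using r0 unfolding w1_def by simp
  have "z1 - w1 = complex_of_real (r - 1) * w1" unfolding z1eq by (simp add: algebra_simps)
  then have "cmod (z1 - w1) = \<bar>r - 1\<bar> * cmod w1" by (simp only: norm_mult norm_of_real)
  then have d1: "cmod (z1 - w1) = 1 - r" using w1n assms(1) r_def by simp
  have d2: "cmod (z2 - w1) \<le> 1 - r" using assms(3) unfolding w1_def r_def by simp
  have "cmod w1 - cmod z2 \<le> cmod (w1 - z2)" by (rule norm_triangle_ineq2)
  then show "cmod z1 \<le> cmod z2" using d2 w1n r_def by (simp add: norm_minus_commute)
  show "b_D_inf z1 z2 = cmod (z1 - z2) / (1 - cmod z1)"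
  proof (rule sup_lemma[of w1])
    show "w1 \<in> sphere 0 1" using w1n by simp
    show "max (cmod (z1 - w1)) (cmod (z2 - w1)) = 1 - cmod z1" using d1 d2 r_def by simp
    show "1 - cmod z1 > 0" using assms(1) by simp
    fix w assume "w \<in> sphere (0::complex) 1"
    then have "cmod w = 1" by simp
    moreover have "cmod w - cmod z1 \<le> cmod (w - z1)" by (rule norm_triangle_ineq2)
    ultimately have "1 - cmod z1 \<le> cmod (z1 - w)" by (simp add: norm_minus_commute)
    then show "1 - cmod z1 \<le> max (cmod (z1 - w)) (cmod (z2 - w))" by simp
  qed
qed

lemma rot_coord:
  assumes "cmod u = 1"
  shows "cmod (a - b)^2 = (Re (a * cnj u) - Re (b * cnj u))^2 + (Im (a * cnj u) - Im (b * cnj u))^2"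
proof -
  have "cmod (a - b) = cmod (a * cnj u - b * cnj u)"
    using assms by (simp add: left_diff_distrib[symmetric] norm_mult)
  then show ?thesis by (simp add: cmod_power2)
qed

lemma dist_unit:
  assumes "0 < cmod z" "cmod z < 1"
  shows "cmod (z - z / complex_of_real (cmod z)) = 1 - cmod z"
proof -
  define r where "r = cmod z"
  define w1 where "w1 = z / complex_of_real r"
  have w1n: "cmod w1 = 1" using assms unfolding w1_def r_def by (simp add: norm_divide)
  have z1eq: "z = complex_of_real r * w1" using assms unfolding w1_def r_def by simp
  have "z - w1 = complex_of_real (r - 1) * w1" unfolding z1eq by (simp add: algebra_simps)
  then have "cmod (z - w1) = \<bar>r - 1\<bar> * cmod w1" by (simp only: norm_mult norm_of_real)
  then show ?thesis using w1n assms r_def w1_def by simp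
qed

lemma sq_gt_mid1:
  fixes p1 p2 X :: real
  assumes "(p2 - X)^2 > (p1 - X)^2" "p2 < p1"
  shows "(p1+p2)/2 < X"
proof -
  have "(p2 - X)^2 - (p1 - X)^2 = (p2 - p1) * (p2 + p1 - 2*X)" by (simp add: power2_eq_square algebra_simps)
  then have "(p2 - p1) * (p2 + p1 - 2*X) > 0" using assms by simp
  then have "p2 + p1 - 2*X < 0" using assms(2) by (simp add: zero_less_mult_iff)
  then show ?thesis by simp
qed

lemma sq_gt_mid2:
  fixes p1 p2 X :: real
  assumes "(p1 - X)^2 > (p2 - X)^2" "p2 < p1"
  shows "X < (p1+p2)/2"
proof -
  have "(p1 - X)^2 - (p2 - X)^2 = (p1 - p2) * (p1 + p2 - 2*X)" by (simp add: power2_eq_square algebra_simps)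
  then have "(p1 - p2) * (p1 + p2 - 2*X) > 0" using assms by simp
  then have "p1 + p2 - 2*X > 0" using assms(2) by (simp add: zero_less_mult_iff)
  then show ?thesis by simp
qed

lemma min_sq:
  fixes a b :: real
  assumes "a \<ge> 0" "b \<ge> 0"
  shows "(min a b)^2 = min (a^2) (b^2)" "(max a b)^2 = max (a^2) (b^2)"
  using assms by (auto simp: min_def max_def power_mono dest: power2_le_imp_le)


lemma caseC:
  fixes z1 z2 :: complex and aa :: real and f :: "complex \<Rightarrow> complex"
  assumes z1: "cmod z1 < 1" and z2: "cmod z2 < 1" and n1: "z1 \<noteq> 0" and n2: "z2 \<noteq> 0" and ne: "z1 \<noteq> z2"
    and nA: "\<not> cmod z1 \<le> 1 - cmod (z2 - z1 / complex_of_real (cmod z1))"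
    and nB: "\<not> cmod z2 \<le> 1 - cmod (z1 - z2 / complex_of_real (cmod z2))"
    and aa: "aa = (cmod z1 ^ 2 - cmod z2 ^ 2) / (2 * cmod (z1 - z2))"
    and f: "f = (\<lambda>s. (z1 - z2) / complex_of_real (cmod (z1 - z2)) *
         (complex_of_real aa + s * \<i> * complex_of_real (sqrt (1 - aa ^ 2))))"
  shows "b_D_inf z1 z2 = cmod (z1 - z2) / min (cmod (f 1 - z1)) (cmod (f (-1) - z1))"
proof -
  define c where "c = cmod (z1 - z2)"
  have c0: "c > 0" using ne c_def by simp
  define u where "u = (z1 - z2) / complex_of_real c"
  have un: "cmod u = 1" using c0 unfolding u_def c_def by (simp add: norm_divide)
  have uu: "u * cnj u = 1" using complex_norm_square[of u] un by simp
  have zd: "z1 - z2 = complex_of_real c * u" using c0 unfolding u_def by simp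
  define p1 where "p1 = Re (z1 * cnj u)"
  define p2 where "p2 = Re (z2 * cnj u)"
  define q where "q = Im (z1 * cnj u)"
  have "z1 * cnj u - z2 * cnj u = complex_of_real c"
    using uu by (simp add: left_diff_distrib[symmetric] zd)
  then have pc: "p1 - p2 = c" and q2: "Im (z2 * cnj u) = q"
    unfolding p1_def p2_def q_def by (metis Re_complex_of_real minus_complex.sel(1),
        metis Im_complex_of_real minus_complex.sel(2) eq_iff_diff_eq_0)
  have pl: "p2 < p1" using pc c0 by simp
  have r1sq: "cmod z1 ^ 2 = p1^2 + q^2" using rot_coord[OF un, of z1 0] unfolding p1_def q_def by simp
  have r2sq: "cmod z2 ^ 2 = p2^2 + q^2" using rot_coord[OF un, of z2 0] q2 unfolding p2_def by simp
  have aam: "aa = (p1+p2)/2"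
  proof -
    have "aa = ((p1^2+q^2) - (p2^2+q^2)) / (2*(p1-p2))" using aa r1sq r2sq pc c_def by simp
    also have "\<dots> = ((p1-p2)*(p1+p2)) / (2*(p1-p2))" by (simp add: power2_eq_square algebra_simps)
    also have "\<dots> = (p1+p2)/2" using pl by (simp add: field_simps)
    finally show ?thesis .
  qed
  have "\<bar>aa\<bar> \<le> 1"
  proof -
    have "aa = Re ((z1 + z2) * cnj u) / 2" using aam unfolding p1_def p2_def by (simp add: distrib_right)
    moreover have "\<bar>Re ((z1 + z2) * cnj u)\<bar> \<le> cmod ((z1 + z2) * cnj u)" by (rule abs_Re_le_cmod)
    moreover have "cmod ((z1 + z2) * cnj u) = cmod (z1 + z2)" using un by (simp add: norm_mult)
    moreover have "cmod (z1 + z2) \<le> cmod z1 + cmod z2" by (rule norm_triangle_ineq)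
    ultimately show ?thesis using z1 z2 by simp
  qed
  then have aa1: "aa^2 \<le> 1" by (simp add: abs_square_le_1)
  define S where "S = sqrt (1 - aa^2)"
  have S0: "S \<ge> 0" using aa1 S_def by simp
  have "S^2 = 1 - aa^2" using aa1 S_def by simp
  then have aS: "aa^2 + S^2 = 1" by simp
  have fe: "f = (\<lambda>s. u * (complex_of_real aa + s * \<i> * complex_of_real S))"
    using f u_def c_def S_def by simp
  have "f 1 * cnj u = (u * cnj u) * (complex_of_real aa + \<i> * complex_of_real S)"
    unfolding fe by (simp add: algebra_simps)
  then have fp: "f 1 * cnj u = complex_of_real aa + \<i> * complex_of_real S" using uu by simp
  have "f (-1) * cnj u = (u * cnj u) * (complex_of_real aa - \<i> * complex_of_real S)"
    unfolding fe by (simp add: algebra_simps)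
  then have fm: "f (-1) * cnj u = complex_of_real aa - \<i> * complex_of_real S" using uu by simp
  have fpc: "Re (f 1 * cnj u) = aa" "Im (f 1 * cnj u) = S" unfolding fp by simp_all
  have fmc: "Re (f (-1) * cnj u) = aa" "Im (f (-1) * cnj u) = - S" unfolding fm by simp_all
  have fpn: "cmod (f 1) = 1"
  proof -
    have "cmod (f 1 - 0)^2 = 1" using rot_coord[OF un, of "f 1" 0] fpc aS by simp
    then show ?thesis using norm_ge_zero[of "f 1"] norm_ge_zero[of "f (-1)"] by (auto simp add: power2_eq_1_iff)
  qed
  have fmn: "cmod (f (-1)) = 1"
  proof -
    have "cmod (f (-1) - 0)^2 = 1" using rot_coord[OF un, of "f (-1)" 0] fmc aS by simp
    then show ?thesis using norm_ge_zero[of "f 1"] norm_ge_zero[of "f (-1)"] by (auto simp add: power2_eq_1_iff)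
  qed
  have "aa - p2 = -(aa - p1)" using aam by simp
  then have mid: "(aa - p2)^2 = (aa - p1)^2" by (metis power2_minus)
  have dp1: "cmod (f 1 - z1)^2 = (aa - p1)^2 + (S - q)^2"
    using rot_coord[OF un, of "f 1" z1] fpc unfolding p1_def q_def by simp
  have dp2: "cmod (f 1 - z2)^2 = (aa - p1)^2 + (S - q)^2"
    using rot_coord[OF un, of "f 1" z2] fpc q2 mid unfolding p2_def by simp
  have dm1: "cmod (f (-1) - z1)^2 = (aa - p1)^2 + (- S - q)^2"
    using rot_coord[OF un, of "f (-1)" z1] fmc unfolding p1_def q_def by simp
  have dm2: "cmod (f (-1) - z2)^2 = (aa - p1)^2 + (- S - q)^2"
    using rot_coord[OF un, of "f (-1)" z2] fmc q2 mid unfolding p2_def by simp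
  have ep: "cmod (f 1 - z2) = cmod (f 1 - z1)"
    using dp1 dp2 by (metis norm_ge_zero power2_eq_iff_nonneg)
  have em: "cmod (f (-1) - z2) = cmod (f (-1) - z1)"
    using dm1 dm2 by (metis norm_ge_zero power2_eq_iff_nonneg)
  define r1 where "r1 = cmod z1"
  define r2 where "r2 = cmod z2"
  have r1p: "r1 > 0" "r1^2 = p1^2+q^2" using n1 r1sq r1_def by simp_all
  have r2p: "r2 > 0" "r2^2 = p2^2+q^2" using n2 r2sq r2_def by simp_all
  have A: "aa * r1 < p1"
  proof -
    define w1 where "w1 = z1 / complex_of_real r1"
    have "cmod (z1 - w1) = 1 - r1" using dist_unit[of z1] n1 z1 unfolding w1_def r1_def by simp
    then have "cmod (z2 - w1) > cmod (z1 - w1)" using nA unfolding w1_def r1_def by simp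
    then have "cmod (z2 - w1)^2 > cmod (z1 - w1)^2" by (simp add: power_strict_mono)
    moreover have "w1 * cnj u = (z1 * cnj u) / complex_of_real r1" unfolding w1_def by simp
    then have "Re (w1 * cnj u) = p1 / r1" "Im (w1 * cnj u) = q / r1"
      unfolding p1_def q_def by (simp_all add: Re_divide_of_real Im_divide_of_real)
    ultimately have "(p2 - p1/r1)^2 + (q - q/r1)^2 > (p1 - p1/r1)^2 + (q - q/r1)^2"
      using rot_coord[OF un, of z2 w1] rot_coord[OF un, of z1 w1] q2 unfolding p1_def p2_def q_def by simp
    then have "(p2 - p1/r1)^2 > (p1 - p1/r1)^2" by simp
    from sq_gt_mid1[OF this pl] have "aa < p1/r1" by (simp only: aam)
    then show ?thesis using r1p by (simp add: pos_less_divide_eq)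
  qed
  have B: "p2 < aa * r2"
  proof -
    define w2 where "w2 = z2 / complex_of_real r2"
    have "cmod (z2 - w2) = 1 - r2" using dist_unit[of z2] n2 z2 unfolding w2_def r2_def by simp
    then have "cmod (z1 - w2) > cmod (z2 - w2)" using nB unfolding w2_def r2_def by simp
    then have "cmod (z1 - w2)^2 > cmod (z2 - w2)^2" by (simp add: power_strict_mono)
    moreover have "w2 * cnj u = (z2 * cnj u) / complex_of_real r2" unfolding w2_def by simp
    then have "Re (w2 * cnj u) = p2 / r2" "Im (w2 * cnj u) = q / r2"
      unfolding p2_def using q2 by (simp_all add: Re_divide_of_real Im_divide_of_real)
    ultimately have "(p1 - p2/r2)^2 + (q - q/r2)^2 > (p2 - p2/r2)^2 + (q - q/r2)^2"
      using rot_coord[OF un, of z1 w2] rot_coord[OF un, of z2 w2] q2 unfolding p1_def p2_def q_def by simp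
    then have "(p1 - p2/r2)^2 > (p2 - p2/r2)^2" by simp
    from sq_gt_mid2[OF this pl] have "p2/r2 < aa" by (simp only: aam)
    then show ?thesis using r2p by (simp add: pos_divide_less_eq)
  qed
  define m where "m = min (cmod (f 1 - z1)) (cmod (f (-1) - z1))"
  have fpz: "f 1 \<noteq> z1" using fpn z1 by auto
  have fmz: "f (-1) \<noteq> z1" using fmn z1 by auto
  have m0: "m > 0" using fpz fmz m_def by simp
  have "b_D_inf z1 z2 = cmod (z1 - z2) / m"
  proof (rule sup_lemma[of "if cmod (f 1 - z1) \<le> cmod (f (-1) - z1) then f 1 else f (-1)"])
    show "(if cmod (f 1 - z1) \<le> cmod (f (-1) - z1) then f 1 else f (-1)) \<in> sphere 0 1"
      using fpn fmn by simp
    show "max (cmod (z1 - (if cmod (f 1 - z1) \<le> cmod (f (-1) - z1) then f 1 else f (-1))))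
      (cmod (z2 - (if cmod (f 1 - z1) \<le> cmod (f (-1) - z1) then f 1 else f (-1)))) = m"
      using ep em unfolding m_def by (simp add: norm_minus_commute)
    show "m > 0" by (rule m0)
    fix w assume "w \<in> sphere (0::complex) 1"
    then have wn: "cmod w = 1" by simp
    define x where "x = Re (w * cnj u)"
    define y where "y = Im (w * cnj u)"
    have xy: "x^2 + y^2 = 1" using rot_coord[OF un, of w 0] wn unfolding x_def y_def by simp
    have d1: "cmod (w - z1)^2 = (x - p1)^2 + (y - q)^2"
      using rot_coord[OF un, of w z1] unfolding x_def y_def p1_def q_def by simp
    have d2: "cmod (w - z2)^2 = (x - p2)^2 + (y - q)^2"
      using rot_coord[OF un, of w z2] q2 unfolding x_def y_def p2_def by simp
    have "min ((aa-p1)^2+(S-q)^2) ((aa-p1)^2+(-S-q)^2) \<le> max ((x-p1)^2+(y-q)^2) ((x-p2)^2+(y-q)^2)"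
      by (rule core[OF xy pl aam aS S0 r1p(2) r1p(1) A r2p(2) r2p(1) B])
    then have "min (cmod (f 1 - z1)^2) (cmod (f (-1) - z1)^2) \<le> max (cmod (w - z1)^2) (cmod (w - z2)^2)"
      using dp1 dm1 d1 d2 by simp
    then have "m^2 \<le> (max (cmod (w - z1)) (cmod (w - z2)))^2"
      unfolding m_def by (simp add: min_sq)
    then have "m \<le> max (cmod (w - z1)) (cmod (w - z2))"
      by (rule power2_le_imp_le) (simp add: le_max_iff_disj)
    then show "m \<le> max (cmod (z1 - w)) (cmod (z2 - w))" by (simp add: norm_minus_commute)
  qed
  then show ?thesis unfolding m_def .
qed


theorem theorem3p29:
  fixes z1 z2 z' z'' :: complex
  assumes "z1 \<in> ball 0 1" and "z2 \<in> ball 0 1"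
    and "z1 \<noteq> 0" and "z2 \<noteq> 0" and "z1 \<noteq> z2"
    and "{z', z''} =
      (\<lambda>s. (z1 - z2) / complex_of_real (cmod (z1 - z2)) *
         (complex_of_real ((cmod z1 ^ 2 - cmod z2 ^ 2) / (2 * cmod (z1 - z2)))
          + s * \<i> * complex_of_real
              (sqrt (1 - ((cmod z1 ^ 2 - cmod z2 ^ 2) / (2 * cmod (z1 - z2))) ^ 2))))
      ` {1, -1}"
  shows "b_D_inf z1 z2 =
    (if cmod z1 \<le> 1 - cmod (z2 - z1 / complex_of_real (cmod z1))
        \<or> cmod z2 \<le> 1 - cmod (z1 - z2 / complex_of_real (cmod z2))
     then cmod (z1 - z2) / (1 - min (cmod z1) (cmod z2))
     else cmod (z1 - z2) / min (cmod (z' - z1)) (cmod (z'' - z1)))"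
proof -
  have z1: "cmod z1 < 1" using assms(1) by simp
  have z2: "cmod z2 < 1" using assms(2) by simp
  show ?thesis
  proof (cases "cmod z1 \<le> 1 - cmod (z2 - z1 / complex_of_real (cmod z1))
        \<or> cmod z2 \<le> 1 - cmod (z1 - z2 / complex_of_real (cmod z2))")
    case True
    have "b_D_inf z1 z2 = cmod (z1 - z2) / (1 - min (cmod z1) (cmod z2))"
      using True
    proof
      assume h: "cmod z1 \<le> 1 - cmod (z2 - z1 / complex_of_real (cmod z1))"
      from caseA[OF z1 assms(3) h] show ?thesis by (simp add: min_def)
    next
      assume h: "cmod z2 \<le> 1 - cmod (z1 - z2 / complex_of_real (cmod z2))"
      from caseA[OF z2 assms(4) h] show ?thesis
        by (simp add: min_def b_sym[of z1 z2] norm_minus_commute)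
    qed
    then show ?thesis using True by simp
  next
    case False
    then have nA: "\<not> cmod z1 \<le> 1 - cmod (z2 - z1 / complex_of_real (cmod z1))"
      and nB: "\<not> cmod z2 \<le> 1 - cmod (z1 - z2 / complex_of_real (cmod z2))" by auto
    define aa where "aa = (cmod z1 ^ 2 - cmod z2 ^ 2) / (2 * cmod (z1 - z2))"
    define f where "f = (\<lambda>s. (z1 - z2) / complex_of_real (cmod (z1 - z2)) *
         (complex_of_real aa + s * \<i> * complex_of_real (sqrt (1 - aa ^ 2))))"
    have zz: "{z', z''} = {f 1, f (-1)}" using assms(6) unfolding f_def aa_def by simp
    have b: "b_D_inf z1 z2 = cmod (z1 - z2) / min (cmod (f 1 - z1)) (cmod (f (-1) - z1))"
      by (rule caseC[OF z1 z2 assms(3,4,5) nA nB aa_def f_def])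
    have "min (cmod (z' - z1)) (cmod (z'' - z1)) = min (cmod (f 1 - z1)) (cmod (f (-1) - z1))"
      using zz unfolding doubleton_eq_iff by (auto simp: min.commute)
    then show ?thesis using False b by simp
  qed
qed

end
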